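(* Let $d\ge2$, $L\in(0,\infty)$ and let $\Gamma$ be the image of $r\in C^1([0,L],\mathbb R^d)$ with $|r'(s)|=1$ on $[0,L]$, where $\Gamma$ is simple in the sense that $r(s_1)=r(s_2)$ with $s_1<s_2$ may hold only if $s_1=0$ and $s_2=L$, and if $r(0)=r(L)$ then $r'(0)=r'(L)$. Let $w\in H^1(\Gamma)$, identified with its continuous representative, and set $w_0=\min_\Gamma w$, $w_1=\max_\Gamma w$, $\tilde\Gamma=\{\mathbf x\in\Gamma: w_0<w(\mathbf x)<w_1\}$. Then $$\int_{\tilde\Gamma}\big(w(r(s))-w_0\big)^2\,ds\le|\tilde\Gamma|^2\int_{\tilde\Gamma}|\nabla_\tau w(r(s))|^2\,ds,$$ where $|\tilde\Gamma|$ is the one-dimensional Hausdorff measure of $\tilde\Gamma$.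
   Context: $H^1(\Gamma)$ is the space of functions $w$ on $\Gamma$ with $w\circ r\in H^1((0,L))$; $\nabla_\tau w(r(s))=\frac{d}{ds}w(r(s))$; integrals over $\tilde\Gamma$ with respect to $ds$ are over the set of parameters $s$ with $r(s)\in\tilde\Gamma$. *)

theory Defs
  imports "HOL-Analysis.Analysis"
begin

definition hausdorff1_pre :: "real \<Rightarrow> 'a::euclidean_space set \<Rightarrow> ennreal" where
  "hausdorff1_pre \<delta> A =
     (INF C \<in> {C :: nat \<Rightarrow> 'a set. A \<subseteq> (\<Union>i. C i) \<and> (\<forall>i. bounded (C i) \<and> diameter (C i) \<le> \<delta>)}.
        (\<Sum>i. ennreal (diameter (C i))))"

definition hausdorff1 :: "'a::euclidean_space set \<Rightarrow> ennreal" where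
  "hausdorff1 A = (SUP \<delta> \<in> {0<..}. hausdorff1_pre \<delta> A)"

definition test_fun :: "real \<Rightarrow> real \<Rightarrow> (real \<Rightarrow> real) \<Rightarrow> bool" where
  "test_fun a b \<phi> \<longleftrightarrow>
     (\<forall>n. ((deriv ^^ n) \<phi>) differentiable_on UNIV) \<and>
     (\<exists>K. compact K \<and> K \<subseteq> {a<..<b} \<and> (\<forall>x. x \<notin> K \<longrightarrow> \<phi> x = 0))"

definition H1_weak_deriv :: "real \<Rightarrow> real \<Rightarrow> (real \<Rightarrow> real) \<Rightarrow> (real \<Rightarrow> real) \<Rightarrow> bool" where
  "H1_weak_deriv a b u g \<longleftrightarrow>
     u absolutely_integrable_on {a<..<b} \<and> (\<lambda>x. (u x)\<^sup>2) integrable_on {a<..<b} \<and>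
     g absolutely_integrable_on {a<..<b} \<and> (\<lambda>x. (g x)\<^sup>2) integrable_on {a<..<b} \<and>
     (\<forall>\<phi>. test_fun a b \<phi> \<longrightarrow>
        integral {a<..<b} (\<lambda>x. u x * deriv \<phi> x) = - integral {a<..<b} (\<lambda>x. g x * \<phi> x))"

end

theory Submission
  imports Defs "HOL-Computational_Algebra.Polynomial"
begin

primrec smoothn :: "nat \<Rightarrow> (real \<Rightarrow> real) \<Rightarrow> bool" where
  "smoothn 0 f = (\<forall>x. f differentiable (at x))"
| "smoothn (Suc n) f = ((\<forall>x. f differentiable (at x)) \<and> smoothn n (deriv f))"

lemma smoothn_diff: "smoothn n f \<Longrightarrow> f differentiable (at x)"
  by (cases n) auto

lemma smoothn_mono: "smoothn (Suc n) f \<Longrightarrow> smoothn n f"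
proof (induction n arbitrary: f)
  case 0 then show ?case by simp
next
  case (Suc n) then show ?case by simp
qed

lemma smoothn_iter: "smoothn n f \<Longrightarrow> k \<le> n \<Longrightarrow> ((deriv ^^ k) f) differentiable (at x)"
proof (induction n arbitrary: f k)
  case 0 then show ?case by simp
next
  case (Suc n)
  show ?case
  proof (cases k)
    case 0 then show ?thesis using Suc by simp
  next
    case (Suc k')
    then have "(deriv ^^ k) f = (deriv ^^ k') (deriv f)" by (simp only: funpow_Suc_right o_def)
    then show ?thesis using Suc.IH[of "deriv f" k'] Suc.prems Suc by simp
  qed
qed

lemma deriv_fun_eq: "(\<And>x. (f has_real_derivative f' x) (at x)) \<Longrightarrow> deriv f = f'"
  by (rule ext) (rule DERIV_imp_deriv)

lemma diff_real_deriv: "f differentiable (at x) \<Longrightarrow> (f has_real_derivative deriv f x) (at x)"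
  using DERIV_deriv_iff_real_differentiable by blast

lemma smoothn_const: "smoothn n (\<lambda>x. c)"
proof (induction n)
  case 0 then show ?case by simp
next
  case (Suc n)
  have "deriv (\<lambda>x. c) = (\<lambda>x. 0)" by (rule deriv_fun_eq) auto
  moreover have "smoothn n (\<lambda>x::real. 0::real)"
  proof (induction n)
    case 0 then show ?case by simp
  next
    case (Suc n)
    have "deriv (\<lambda>x::real. 0::real) = (\<lambda>x. 0)" by (rule deriv_fun_eq) auto
    then show ?case using Suc by simp
  qed
  ultimately show ?case by simp
qed

lemma smoothn_add: "smoothn n f \<Longrightarrow> smoothn n g \<Longrightarrow> smoothn n (\<lambda>x. f x + g x)"
proof (induction n arbitrary: f g)
  case 0 then show ?case by auto
next
  case (Suc n)
  have "deriv (\<lambda>x. f x + g x) = (\<lambda>x. deriv f x + deriv g x)"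
    apply (rule deriv_fun_eq)
    using Suc.prems by (auto intro!: derivative_eq_intros diff_real_deriv)
  then show ?case using Suc by auto
qed

lemma smoothn_mult: "smoothn n f \<Longrightarrow> smoothn n g \<Longrightarrow> smoothn n (\<lambda>x. f x * g x)"
proof (induction n arbitrary: f g)
  case 0 then show ?case by auto
next
  case (Suc n)
  have "deriv (\<lambda>x. f x * g x) = (\<lambda>x. deriv f x * g x + f x * deriv g x)"
    apply (rule deriv_fun_eq)
    using Suc.prems by (auto intro!: derivative_eq_intros diff_real_deriv)
  moreover have "smoothn n (\<lambda>x. deriv f x * g x + f x * deriv g x)"
    using Suc smoothn_mono by (intro smoothn_add Suc.IH) auto
  ultimately show ?case using Suc by auto
qed

lemma smoothn_neg: "smoothn n f \<Longrightarrow> smoothn n (\<lambda>x. - f x)"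
proof -
  assume "smoothn n f"
  then have "smoothn n (\<lambda>x. (-1) * f x)" by (intro smoothn_mult smoothn_const)
  then show ?thesis by simp
qed

lemma smoothn_inverse: "smoothn n f \<Longrightarrow> (\<And>x. f x \<noteq> 0) \<Longrightarrow> smoothn n (\<lambda>x. inverse (f x))"
proof (induction n arbitrary: f)
  case 0 then show ?case by (auto intro!: derivative_intros)
next
  case (Suc n)
  have "deriv (\<lambda>x. inverse (f x)) = (\<lambda>x. - (deriv f x * (inverse (f x) * inverse (f x))))"
    apply (rule deriv_fun_eq)
    using Suc.prems by (auto intro!: derivative_eq_intros diff_real_deriv simp: field_simps power2_eq_square)
  moreover have "smoothn n (\<lambda>x. - (deriv f x * (inverse (f x) * inverse (f x))))"
    using Suc smoothn_mono by (intro smoothn_neg smoothn_mult Suc.IH) auto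
  moreover have "\<forall>x. (\<lambda>x. inverse (f x)) differentiable (at x)"
    using Suc.prems by (auto intro!: derivative_intros)
  ultimately show ?case by simp
qed

lemma affine_has_deriv:
  fixes f :: "real \<Rightarrow> real"
  assumes "f differentiable (at (a*x+b))"
  shows "((\<lambda>x. f (a * x + b)) has_real_derivative (a * deriv f (a * x + b))) (at x)"
proof -
  have "((\<lambda>x. a*x+b) has_real_derivative a) (at x)" by (auto intro!: derivative_eq_intros)
  from DERIV_chain2[OF diff_real_deriv[OF assms] this] show ?thesis by (simp add: mult.commute)
qed

lemma affine_diff: "(f::real\<Rightarrow>real) differentiable (at (a*x+b)) \<Longrightarrow> (\<lambda>x. f (a * x + b)) differentiable (at x)"
  using affine_has_deriv[of f a x b] unfolding real_differentiable_def by blast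

lemma smoothn_affine: "smoothn n f \<Longrightarrow> smoothn n (\<lambda>x. f (a * x + b))"
proof (induction n arbitrary: f)
  case 0
  then show ?case by (auto intro!: affine_diff)
next
  case (Suc n)
  have "deriv (\<lambda>x. f (a * x + b)) = (\<lambda>x. a * deriv f (a * x + b))"
    apply (rule deriv_fun_eq)
    using Suc.prems by (auto intro!: affine_has_deriv)
  moreover have "smoothn n (\<lambda>x. a * deriv f (a * x + b))"
    using Suc by (intro smoothn_mult smoothn_const Suc.IH) auto
  moreover have "\<forall>x. (\<lambda>x. f (a * x + b)) differentiable (at x)"
    using Suc.prems by (auto intro!: affine_diff)
  ultimately show ?case by simp
qed

definition hp :: "real poly \<Rightarrow> real \<Rightarrow> real" where
  "hp p x = (if x > 0 then poly p (inverse x) * exp (- inverse x) else 0)"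

definition Dp :: "real poly \<Rightarrow> real poly" where
  "Dp p = [:0,0,1:] * (p - pderiv p)"

lemma poly_exp_tendsto: "((\<lambda>z::real. poly q z * exp (- z)) \<longlongrightarrow> 0) at_top"
proof -
  have eq: "poly q z * exp (- z) = (\<Sum>i\<le>degree q. coeff q i * (z ^ i / exp z))" for z
    by (simp add: poly_altdef exp_minus divide_inverse sum_distrib_right mult.assoc)
  have "((\<lambda>z. \<Sum>i\<le>degree q. coeff q i * (z ^ i / exp z)) \<longlongrightarrow> (\<Sum>i\<le>degree q. coeff q i * 0)) at_top"
    by (intro tendsto_sum tendsto_mult tendsto_const tendsto_power_div_exp_0)
  then show ?thesis by (simp add: eq)
qed

lemma hp_deriv: "(hp p has_real_derivative hp (Dp p) x) (at x)"
proof -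
  consider "x > 0" | "x < 0" | "x = 0" by linarith
  then show ?thesis
  proof cases
    case 1
    have d: "((\<lambda>x. poly p (inverse x) * exp (- inverse x)) has_real_derivative hp (Dp p) x) (at x)"
      using 1
      apply (auto intro!: derivative_eq_intros simp: hp_def Dp_def)
      apply (auto simp: field_simps power2_eq_square)
      done
    show ?thesis
      apply (rule has_field_derivative_transform_within_open[OF d, of "{0<..}"])
      using 1 by (auto simp: hp_def)
  next
    case 2
    have d: "((\<lambda>x. 0) has_real_derivative hp (Dp p) x) (at x)"
      using 2 by (auto intro!: derivative_eq_intros simp: hp_def)
    show ?thesis
      apply (rule has_field_derivative_transform_within_open[OF d, of "{..<0}"])
      using 2 by (auto simp: hp_def)
  next
    case 3
    have "((\<lambda>y. (hp p y - hp p 0) / (y - 0)) \<longlongrightarrow> 0) (at 0)"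
    proof (rule filterlim_split_at_real)
      show "((\<lambda>y. (hp p y - hp p 0) / (y - 0)) \<longlongrightarrow> 0) (at_left 0)"
        apply (rule tendsto_eventually)
        using eventually_at_left_real[of "-1::real" 0]
        by (auto simp: hp_def elim!: eventually_mono)
    next
      have lim: "((\<lambda>z. poly ([:0,1:] * p) z * exp (- z)) \<longlongrightarrow> 0) at_top"
        by (rule poly_exp_tendsto)
      have "((\<lambda>y. poly ([:0,1:] * p) (inverse y) * exp (- inverse y)) \<longlongrightarrow> 0) (at_right 0)"
        by (rule filterlim_compose[OF lim filterlim_inverse_at_top_right])
      then show "((\<lambda>y. (hp p y - hp p 0) / (y - 0)) \<longlongrightarrow> 0) (at_right 0)"
        apply (rule filterlim_cong[THEN iffD1, rotated 3])
          apply simp apply simp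
        using eventually_at_right_real[of 0 "1::real"]
        by (auto simp: hp_def field_simps elim!: eventually_mono)
    qed
    then show ?thesis using 3 by (simp add: has_field_derivative_iff hp_def)
  qed
qed

lemma deriv_hp: "deriv (hp p) = hp (Dp p)"
  using deriv_fun_eq hp_deriv by blast

lemma smoothn_hp: "smoothn n (hp p)"
proof (induction n arbitrary: p)
  case 0 then show ?case using hp_deriv real_differentiable_def by auto
next
  case (Suc n) then show ?case using hp_deriv real_differentiable_def deriv_hp by auto
qed

lemma hp_chain:
  assumes "(f has_real_derivative f') (at x within S)"
  shows "((\<lambda>x. hp p (f x)) has_real_derivative hp (Dp p) (f x) * f') (at x within S)"
  using DERIV_chain2[OF hp_deriv assms] .

lemma hp1_nonpos: "x \<le> 0 \<Longrightarrow> hp p x = 0" by (simp add: hp_def)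
lemma hp1_pos: "x > 0 \<Longrightarrow> hp 1 x > 0" by (simp add: hp_def)
lemma hp1_nonneg: "hp 1 x \<ge> 0" by (simp add: hp_def)
lemma hpd_nonneg: "hp (Dp 1) x \<ge> 0" by (simp add: hp_def Dp_def)

definition St :: "real \<Rightarrow> real" where
  "St x = hp 1 x / (hp 1 x + hp 1 (1 - x))"

definition Sd :: "real \<Rightarrow> real" where
  "Sd x = (hp (Dp 1) x * hp 1 (1 - x) + hp 1 x * hp (Dp 1) (1 - x)) / (hp 1 x + hp 1 (1 - x))^2"

lemma den_pos: "hp 1 x + hp 1 (1 - x) > 0"
proof (cases "x > 0")
  case True then show ?thesis using hp1_pos[of x] hp1_nonneg[of "1-x"] by linarith
next
  case False then show ?thesis using hp1_pos[of "1-x"] hp1_nonneg[of x] by linarith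
qed

lemma St_deriv: "(St has_real_derivative Sd x) (at x within S)"
proof -
  have "((\<lambda>x. hp 1 x / (hp 1 x + hp 1 (1 - x))) has_real_derivative Sd x) (at x within S)"
    using den_pos[of x]
    apply (intro DERIV_cong[OF DERIV_divide])
      apply (auto intro!: derivative_eq_intros hp_chain simp: Sd_def)
    apply (simp add: algebra_simps power2_eq_square)
    done
  then show ?thesis by (simp add: St_def[abs_def])
qed

lemma St_zero: "x \<le> 0 \<Longrightarrow> St x = 0" by (simp add: St_def hp1_nonpos)
lemma St_one: "x \<ge> 1 \<Longrightarrow> St x = 1"
  using hp1_pos[of x] by (simp add: St_def hp1_nonpos)
lemma St_nonneg: "St x \<ge> 0" using den_pos[of x] hp1_nonneg[of x] by (simp add: St_def)
lemma St_le1: "St x \<le> 1"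
  using den_pos[of x] hp1_nonneg[of x] hp1_nonneg[of "1-x"] by (simp add: St_def field_simps)
lemma Sd_nonneg: "Sd x \<ge> 0"
  using hp1_nonneg[of x] hp1_nonneg[of "1-x"] hpd_nonneg[of x] hpd_nonneg[of "1-x"]
  by (simp add: Sd_def)
lemma Sd_zero: "x \<le> 0 \<or> x \<ge> 1 \<Longrightarrow> Sd x = 0"
  by (auto simp: Sd_def hp1_nonpos)

lemma smoothn_St: "smoothn n St"
proof -
  have e: "(\<lambda>x. hp 1 ((-1) * x + 1)) = (\<lambda>x. hp 1 (1 - x))" by simp
  have a: "smoothn n (\<lambda>x. hp 1 (1 - x))"
    using smoothn_affine[OF smoothn_hp, of n 1 "-1" 1] unfolding e .
  have nz: "\<And>x. hp 1 x + hp 1 (1 - x) \<noteq> 0" using den_pos by (metis less_irrefl)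
  have "smoothn n (\<lambda>x. hp 1 x * inverse (hp 1 x + hp 1 (1 - x)))"
    by (intro smoothn_mult smoothn_inverse smoothn_add smoothn_hp a nz)
  then show ?thesis by (simp add: St_def[abs_def] divide_inverse)
qed

lemma St_chain:
  assumes "(f has_real_derivative f') (at x within S)"
  shows "((\<lambda>x. St (f x)) has_real_derivative Sd (f x) * f') (at x within S)"
  using DERIV_chain2[OF St_deriv assms] .

definition phi :: "real \<Rightarrow> real \<Rightarrow> real \<Rightarrow> real \<Rightarrow> real" where
  "phi s t e x = St ((x - s) / e) * St ((t - x) / e)"

definition phid :: "real \<Rightarrow> real \<Rightarrow> real \<Rightarrow> real \<Rightarrow> real" where
  "phid s t e x = Sd ((x - s) / e) / e * St ((t - x) / e) - St ((x - s) / e) * (Sd ((t - x) / e) / e)"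

lemma phi_deriv: assumes "e > 0" shows "(phi s t e has_real_derivative phid s t e x) (at x within S)"
proof -
  have d1: "((\<lambda>x. St ((x - s) / e)) has_real_derivative Sd ((x - s) / e) * (1/e)) (at x within S)"
    by (rule St_chain) (use assms in \<open>auto intro!: derivative_eq_intros\<close>)
  have d2: "((\<lambda>x. St ((t - x) / e)) has_real_derivative Sd ((t - x) / e) * (-1/e)) (at x within S)"
    by (rule St_chain) (use assms in \<open>auto intro!: derivative_eq_intros\<close>)
  have "((\<lambda>x. St ((x - s) / e) * St ((t - x) / e)) has_real_derivative phid s t e x) (at x within S)"
    by (rule DERIV_cong[OF DERIV_mult[OF d1 d2]]) (simp add: phid_def)
  then show ?thesis by (simp add: phi_def[abs_def])
qed

lemma smoothn_phi:
  assumes "e > 0" shows "smoothn n (phi s t e)"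
proof -
  have e1: "(\<lambda>x. St ((x - s) / e)) = (\<lambda>x. St ((1/e) * x + (- s/e)))"
    using assms by (auto simp: field_simps)
  have e2: "(\<lambda>x. St ((t - x) / e)) = (\<lambda>x. St ((-1/e) * x + t/e))"
    using assms by (auto simp: field_simps)
  have "smoothn n (\<lambda>x. St ((x - s) / e) * St ((t - x) / e))"
    apply (rule smoothn_mult)
    unfolding e1 e2 by (intro smoothn_affine smoothn_St)+
  then show ?thesis by (simp add: phi_def[abs_def])
qed

lemma test_phi:
  assumes "e > 0" "0 < s" "s < t" "t < L"
  shows "test_fun 0 L (phi s t e)"
proof -
  have 1: "(deriv ^^ n) (phi s t e) differentiable_on UNIV" for n
    using smoothn_iter[OF smoothn_phi[OF assms(1)], of n n] differentiable_at_imp_differentiable_on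
    by blast
  have 2: "phi s t e x = 0" if "x \<notin> {s..t}" for x
  proof -
    from that have "x < s \<or> x > t" by auto
    then show "phi s t e x = 0"
      using assms(1) by (auto simp: phi_def St_zero divide_nonpos_pos)
  qed
  have 3: "{s..t} \<subseteq> {0<..<L}" using assms by auto
  show ?thesis unfolding test_fun_def using 1 2 3 by (intro conjI allI exI[of _ "{s..t}"]) auto
qed

lemma integral_zero_on: "(\<And>x. x \<in> S \<Longrightarrow> f x = 0) \<Longrightarrow> integral S f = (0::real)"
  using integral_cong[of S f "\<lambda>x. 0"] by simp

lemma prod_cont_absint:
  fixes f g :: "real \<Rightarrow> real"
  assumes "g absolutely_integrable_on {a..b}" "continuous_on {a..b} f"
  shows "(\<lambda>x. f x * g x) absolutely_integrable_on {a..b}"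
proof (rule absolutely_integrable_bounded_measurable_product_real)
  show "f \<in> borel_measurable (lebesgue_on {a..b})"
    using assms(2) by (intro continuous_imp_measurable_on_sets_lebesgue) auto
  show "bounded (f ` {a..b})"
    using assms(2) by (intro compact_imp_bounded compact_continuous_image) auto
qed (use assms in auto)

lemma absint_int: "f absolutely_integrable_on S \<Longrightarrow> (f::real\<Rightarrow>real) integrable_on S"
  using absolutely_integrable_on_def by blast

lemma phid_cont: assumes "e > 0" shows "continuous_on UNIV (phid s t e)"
proof -
  have "deriv (phi s t e) = phid s t e" using deriv_fun_eq phi_deriv[OF assms] by blast
  moreover have "deriv (phi s t e) differentiable (at x)" for x
    using smoothn_iter[OF smoothn_phi[OF assms, of 1 s t], of 1 x] by simp
  ultimately show ?thesis
    by (metis continuous_at_imp_continuous_on differentiable_imp_continuous_within)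
qed

lemma phi_cont: "e > 0 \<Longrightarrow> continuous_on UNIV (phi s t e)"
  by (metis continuous_at_imp_continuous_on differentiable_imp_continuous_within phi_deriv real_differentiable_def)

lemma zero_by_eps: "(\<And>\<eta>. \<eta> > 0 \<Longrightarrow> \<bar>a\<bar> \<le> 4 * \<eta>) \<Longrightarrow> a = (0::real)"
proof (rule ccontr)
  assume h: "\<And>\<eta>. \<eta> > 0 \<Longrightarrow> \<bar>a\<bar> \<le> 4 * \<eta>" and "a \<noteq> 0"
  then have "\<bar>a\<bar> \<le> 4 * (\<bar>a\<bar>/8)" using h[of "\<bar>a\<bar>/8"] by simp
  then show False using \<open>a \<noteq> 0\<close> by simp
qed

lemma int_cmul_real: "f integrable_on S \<Longrightarrow> (\<lambda>x. c * f x :: real) integrable_on S"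
  using integrable_on_cmult_left[of f S c] by simp

lemma int_abs_bound:
  fixes f g :: "real \<Rightarrow> real"
  assumes "f integrable_on S" "g integrable_on S" "\<And>x. x\<in>S \<Longrightarrow> \<bar>f x\<bar> \<le> g x"
  shows "\<bar>integral S f\<bar> \<le> integral S g"
  using Henstock_Kurzweil_Integration.integral_norm_bound_integral[of f S g] assms by simp

lemma int_shift:
  fixes a d :: "real \<Rightarrow> real"
  assumes "(\<lambda>x. a x * d x) integrable_on S" "d integrable_on S"
  shows "integral S (\<lambda>x. (a x - c) * d x) = integral S (\<lambda>x. a x * d x) - c * integral S d"
proof -
  have "integral S (\<lambda>x. (a x - c) * d x) = integral S (\<lambda>x. a x * d x - c * d x)"
    by (simp add: left_diff_distrib)
  also have "\<dots> = integral S (\<lambda>x. a x * d x) - integral S (\<lambda>x. c * d x)"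
    by (rule Henstock_Kurzweil_Integration.integral_diff[OF assms(1) int_cmul_real[OF assms(2)]])
  finally show ?thesis by simp
qed

lemma weak_ftc_interior:
  fixes u g :: "real \<Rightarrow> real"
  assumes uc: "continuous_on {0..L} u" and H: "H1_weak_deriv 0 L u g"
    and st: "0 < s" "s < t" "t < L"
  shows "u t - u s = integral {s..t} g"
proof -
  have gA: "g absolutely_integrable_on {0..L}"
    using H absolutely_integrable_on_Icc_iff_Ioo unfolding H1_weak_deriv_def by blast
  have weak: "\<And>\<phi>. test_fun 0 L \<phi> \<Longrightarrow>
        integral {0<..<L} (\<lambda>x. u x * deriv \<phi> x) = - integral {0<..<L} (\<lambda>x. g x * \<phi> x)"
    using H unfolding H1_weak_deriv_def by blast
  have agi: "(\<lambda>x. \<bar>g x\<bar>) integrable_on {0..L}"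
    using gA unfolding absolutely_integrable_on_def by simp
  define G where "G x = integral {0..x} (\<lambda>y. \<bar>g y\<bar>)" for x
  have Gc: "continuous_on {0..L} G"
    unfolding G_def by (rule indefinite_integral_continuous_1[OF agi])
  have Gdiff: "integral {a..b} (\<lambda>y. \<bar>g y\<bar>) = G b - G a" if "0 \<le> a" "a \<le> b" "b \<le> L" for a b
  proof -
    have "(\<lambda>y. \<bar>g y\<bar>) integrable_on {0..b}"
      using agi that by (intro integrable_on_subinterval[OF agi]) auto
    from Henstock_Kurzweil_Integration.integral_combine[OF that(1,2) this] show ?thesis unfolding G_def by simp
  qed
  show ?thesis
  proof -
    have "u t - u s - integral {s..t} g = 0"
    proof (rule zero_by_eps)
      fix \<eta> :: real assume \<eta>: "\<eta> > 0"
      have cont_pt: "\<exists>d>0. \<forall>x\<in>{0..L}. \<bar>x - p\<bar> < d \<longrightarrow> \<bar>f x - f p\<bar> < \<eta>"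
        if "continuous_on {0..L} f" "p \<in> {0..L}" for f p
        using that \<eta> unfolding continuous_on_iff dist_real_def by blast
      obtain d1 where d1: "d1 > 0" "\<And>x. x\<in>{0..L} \<Longrightarrow> \<bar>x - s\<bar> < d1 \<Longrightarrow> \<bar>u x - u s\<bar> < \<eta>"
        using cont_pt[OF uc, of s] st by auto
      obtain d2 where d2: "d2 > 0" "\<And>x. x\<in>{0..L} \<Longrightarrow> \<bar>x - t\<bar> < d2 \<Longrightarrow> \<bar>u x - u t\<bar> < \<eta>"
        using cont_pt[OF uc, of t] st by auto
      obtain d3 where d3: "d3 > 0" "\<And>x. x\<in>{0..L} \<Longrightarrow> \<bar>x - s\<bar> < d3 \<Longrightarrow> \<bar>G x - G s\<bar> < \<eta>"
        using cont_pt[OF Gc, of s] st by auto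
      obtain d4 where d4: "d4 > 0" "\<And>x. x\<in>{0..L} \<Longrightarrow> \<bar>x - t\<bar> < d4 \<Longrightarrow> \<bar>G x - G t\<bar> < \<eta>"
        using cont_pt[OF Gc, of t] st by auto
      define e where "e = min (min (d1/2) (d2/2)) (min (min (d3/2) (d4/2)) ((t - s)/4))"
      have e0: "e > 0" using d1 d2 d3 d4 st by (simp add: e_def)
      have e4: "e \<le> (t - s) / 4" unfolding e_def by linarith
      have ed: "e < d1" "e < d2" "e < d3" "e < d4" "4 * e \<le> t - s"
        using d1 d2 d3 d4 e4 by (auto simp: e_def)
      let ?\<phi> = "phi s t e" and ?d = "phid s t e"
      have dphi: "deriv ?\<phi> = ?d" using deriv_fun_eq phi_deriv[OF e0] by blast
      have id: "integral {0<..<L} (\<lambda>x. u x * ?d x) = - integral {0<..<L} (\<lambda>x. g x * ?\<phi> x)"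
        using weak[OF test_phi[OF e0 st]] unfolding dphi .
      have St1: "St ((t - x) / e) = 1" "Sd ((t - x) / e) = 0" if "x \<le> s + e" for x
      proof -
        have "(t - x) / e \<ge> 1" using that ed e0 by (simp add: field_simps)
        then show "St ((t - x) / e) = 1" "Sd ((t - x) / e) = 0" by (auto simp: St_one Sd_zero)
      qed
      have St2: "St ((x - s) / e) = 1" "Sd ((x - s) / e) = 0" if "x \<ge> t - e" for x
      proof -
        have "(x - s) / e \<ge> 1" using that ed e0 by (simp add: field_simps)
        then show "St ((x - s) / e) = 1" "Sd ((x - s) / e) = 0" by (auto simp: St_one Sd_zero)
      qed
      have pd1: "?d x = Sd ((x - s) / e) / e" if "x \<le> s + e" for x
        using St1[OF that] by (simp add: phid_def)
      have pd2: "?d x = - (Sd ((t - x) / e) / e)" if "x \<ge> t - e" for x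
        using St2[OF that] by (simp add: phid_def)
      have pd0: "?d x = 0" if H: "x \<le> s \<or> (s + e \<le> x \<and> x \<le> t - e) \<or> t \<le> x" for x
      proof -
        consider "x \<le> s" | "s + e \<le> x \<and> x \<le> t - e" | "t \<le> x" using H by blast
        then show ?thesis
        proof cases
          case 1
          then have "(x - s) / e \<le> 0" using e0 by (simp add: divide_nonpos_pos)
          then show ?thesis using pd1[of x] 1 e0 Sd_zero by simp
        next
          case 2
          then have a: "(x - s) / e \<ge> 1" "(t - x) / e \<ge> 1" using e0 by (auto simp: field_simps)
          then show ?thesis using Sd_zero[of "(x - s) / e"] Sd_zero[of "(t - x) / e"]
            by (simp add: phid_def)
        next
          case 3
          then have "(t - x) / e \<le> 0" using e0 by (simp add: divide_nonpos_pos)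
          then show ?thesis using pd2[of x] 3 ed e0 Sd_zero by simp
        qed
      qed
      have pd1nn: "?d x \<ge> 0" if "x \<le> s + e" for x
        using pd1[OF that] Sd_nonneg e0 by simp
      have pd2np: "?d x \<le> 0" if "x \<ge> t - e" for x
        using pd2[OF that] Sd_nonneg e0 by simp
      have phi_vals: "?\<phi> (s + e) = 1" "?\<phi> s = 0" "?\<phi> t = 0" "?\<phi> (t - e) = 1"
        using St1[of "s+e"] St1[of s] St2[of t] St2[of "t - e"] e0 ed
        by (auto simp: phi_def St_zero St_one)
      have phi01: "0 \<le> ?\<phi> x" "?\<phi> x \<le> 1" for x
        using St_nonneg St_le1 by (auto simp: phi_def intro: mult_nonneg_nonneg mult_le_one)
      have phi_mid: "?\<phi> x = 1" if "s + e \<le> x" "x \<le> t - e" for x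
      proof -
        have "(x - s) / e \<ge> 1" "(t - x) / e \<ge> 1" using that e0 by (auto simp: field_simps)
        then show ?thesis by (simp add: phi_def St_one)
      qed
      have phi_out: "?\<phi> x = 0" if "x \<le> s \<or> t \<le> x" for x
        using that e0 by (auto simp: phi_def St_zero divide_nonpos_pos)
      have dc: "continuous_on A ?d" for A using phid_cont[OF e0] continuous_on_subset by blast
      have phic: "continuous_on A ?\<phi>" for A using phi_cont[OF e0] continuous_on_subset by blast
      have f1c: "continuous_on {a..b} (\<lambda>x. u x * ?d x)" if "0 \<le> a" "b \<le> L" for a b
        using that by (intro continuous_intros dc continuous_on_subset[OF uc]) auto
      have f1i: "(\<lambda>x. u x * ?d x) integrable_on {a..b}" if "0 \<le> a" "b \<le> L" for a b
        using f1c[OF that] integrable_continuous_interval by blast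
      have gsub: "g absolutely_integrable_on {a..b}" if "0 \<le> a" "b \<le> L" for a b
        using that by (intro absolutely_integrable_on_subinterval[OF gA]) auto
      have f2i: "(\<lambda>x. g x * h x) integrable_on {a..b}"
        if "0 \<le> a" "b \<le> L" "continuous_on {a..b} h" for a b h
      proof -
        have "(\<lambda>x. h x * g x) absolutely_integrable_on {a..b}"
          by (rule prod_cont_absint[OF gsub[OF that(1,2)] that(3)])
        then show ?thesis using absint_int by (simp add: mult.commute)
      qed
      have agi_sub: "(\<lambda>x. \<bar>g x\<bar>) integrable_on {a..b}" if "0 \<le> a" "b \<le> L" for a b
        using that by (intro integrable_on_subinterval[OF agi]) auto
      have split5: "integral {0..L} f = integral {0..s} f + integral {s..s+e} f + integral {s+e..t-e} f
            + integral {t-e..t} f + integral {t..L} f" if fi: "f integrable_on {0..L}" for f :: "real \<Rightarrow> real"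
      proof -
        have i1: "f integrable_on {s..L}" "f integrable_on {s+e..L}" "f integrable_on {t-e..L}"
          using st ed e0 by (auto intro!: integrable_on_subinterval[OF fi])
        have "integral {0..L} f = integral {0..s} f + integral {s..L} f"
          using Henstock_Kurzweil_Integration.integral_combine[of 0 s L f] fi st by simp
        moreover have "integral {s..L} f = integral {s..s+e} f + integral {s+e..L} f"
          using Henstock_Kurzweil_Integration.integral_combine[of s "s+e" L f] i1 st ed e0 by simp
        moreover have "integral {s+e..L} f = integral {s+e..t-e} f + integral {t-e..L} f"
          using Henstock_Kurzweil_Integration.integral_combine[of "s+e" "t-e" L f] i1 st ed e0 by simp
        moreover have "integral {t-e..L} f = integral {t-e..t} f + integral {t..L} f"
          using Henstock_Kurzweil_Integration.integral_combine[of "t-e" t L f] i1 st ed e0 by simp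
        ultimately show ?thesis by simp
      qed
      have A: "integral {0<..<L} (\<lambda>x. u x * ?d x) = integral {s..s+e} (\<lambda>x. u x * ?d x) + integral {t-e..t} (\<lambda>x. u x * ?d x)"
      proof -
        have "integral {0<..<L} (\<lambda>x. u x * ?d x) = integral {0..L} (\<lambda>x. u x * ?d x)"
          by (simp add: integral_open_interval_real)
        also have "\<dots> = integral {0..s} (\<lambda>x. u x * ?d x) + integral {s..s+e} (\<lambda>x. u x * ?d x) + integral {s+e..t-e} (\<lambda>x. u x * ?d x)
            + integral {t-e..t} (\<lambda>x. u x * ?d x) + integral {t..L} (\<lambda>x. u x * ?d x)"
          by (rule split5[OF f1i]) (use st in auto)
        also have "integral {0..s} (\<lambda>x. u x * ?d x) = 0" by (rule integral_zero_on) (simp add: pd0)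
        also have "integral {s+e..t-e} (\<lambda>x. u x * ?d x) = 0" by (rule integral_zero_on) (simp add: pd0)
        also have "integral {t..L} (\<lambda>x. u x * ?d x) = 0" by (rule integral_zero_on) (simp add: pd0)
        finally show ?thesis by simp
      qed
      have B: "integral {0<..<L} (\<lambda>x. g x * ?\<phi> x) = integral {s..t} (\<lambda>x. g x * ?\<phi> x)"
      proof -
        have fi: "(\<lambda>x. g x * ?\<phi> x) integrable_on {0..L}" by (rule f2i) (use st phic in auto)
        have i1: "(\<lambda>x. g x * ?\<phi> x) integrable_on {s..L}"
          using st by (auto intro!: integrable_on_subinterval[OF fi])
        have "integral {0<..<L} (\<lambda>x. g x * ?\<phi> x) = integral {0..L} (\<lambda>x. g x * ?\<phi> x)"
          by (simp add: integral_open_interval_real)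
        also have "\<dots> = integral {0..s} (\<lambda>x. g x * ?\<phi> x) + integral {s..L} (\<lambda>x. g x * ?\<phi> x)"
          using Henstock_Kurzweil_Integration.integral_combine[of 0 s L, OF _ _ fi] st by simp
        also have "integral {s..L} (\<lambda>x. g x * ?\<phi> x) = integral {s..t} (\<lambda>x. g x * ?\<phi> x) + integral {t..L} (\<lambda>x. g x * ?\<phi> x)"
          using Henstock_Kurzweil_Integration.integral_combine[of s t L, OF _ _ i1] st by simp
        also have "integral {0..s} (\<lambda>x. g x * ?\<phi> x) = 0" by (rule integral_zero_on) (simp add: phi_out)
        also have "integral {t..L} (\<lambda>x. g x * ?\<phi> x) = 0" by (rule integral_zero_on) (simp add: phi_out)
        finally show ?thesis by simp
      qed
      have intd1: "integral {s..s+e} ?d = 1"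
        using fundamental_theorem_of_calculus[of s "s+e" ?\<phi> ?d] phi_deriv[OF e0] phi_vals e0
        by (auto simp: has_real_derivative_iff_has_vector_derivative[symmetric] integral_unique)
      have intd2: "integral {t-e..t} ?d = -1"
        using fundamental_theorem_of_calculus[of "t-e" t ?\<phi> ?d] phi_deriv[OF e0] phi_vals e0
        by (auto simp: has_real_derivative_iff_has_vector_derivative[symmetric] integral_unique)
      have di1: "?d integrable_on {a..b}" for a b using dc integrable_continuous_interval by blast
      have E1: "\<bar>integral {s..s+e} (\<lambda>x. u x * ?d x) - u s\<bar> \<le> \<eta>"
      proof -
        have "integral {s..s+e} (\<lambda>x. u x * ?d x) - u s = integral {s..s+e} (\<lambda>x. (u x - u s) * ?d x)"
          using int_shift[OF f1i[of s "s+e"] di1[of s "s+e"], of "u s"] intd1 st ed by simp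
        also have "\<bar>\<dots>\<bar> \<le> integral {s..s+e} (\<lambda>x. \<eta> * ?d x)"
        proof (rule int_abs_bound)
          show "(\<lambda>x. (u x - u s) * ?d x) integrable_on {s..s+e}"
            using st ed by (intro integrable_continuous_interval continuous_intros dc continuous_on_subset[OF uc]) auto
          show "(\<lambda>x. \<eta> * ?d x) integrable_on {s..s+e}" using di1 by (intro int_cmul_real) 
          fix x assume x: "x \<in> {s..s+e}"
          then have "\<bar>u x - u s\<bar> < \<eta>" using d1 ed st by auto
          then show "\<bar>(u x - u s) * ?d x\<bar> \<le> \<eta> * ?d x"
            using pd1nn[of x] x by (auto simp: abs_mult intro: mult_right_mono)
        qed
        also have "\<dots> = \<eta>" using intd1 by simp
        finally show ?thesis .
      qed
      have E2: "\<bar>integral {t-e..t} (\<lambda>x. u x * ?d x) + u t\<bar> \<le> \<eta>"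
      proof -
        have "integral {t-e..t} (\<lambda>x. u x * ?d x) + u t = integral {t-e..t} (\<lambda>x. (u x - u t) * ?d x)"
          using int_shift[OF f1i[of "t-e" t] di1[of "t-e" t], of "u t"] intd2 st ed by simp
        also have "\<bar>\<dots>\<bar> \<le> integral {t-e..t} (\<lambda>x. \<eta> * (- ?d x))"
        proof (rule int_abs_bound)
          show "(\<lambda>x. (u x - u t) * ?d x) integrable_on {t-e..t}"
            using st ed by (intro integrable_continuous_interval continuous_intros dc continuous_on_subset[OF uc]) auto
          show "(\<lambda>x. \<eta> * (- ?d x)) integrable_on {t-e..t}" using di1 by (intro int_cmul_real integrable_neg) 
          fix x assume x: "x \<in> {t-e..t}"
          then have "\<bar>u x - u t\<bar> < \<eta>" using d2 ed st by auto
          note lt = this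
          have ad: "\<bar>?d x\<bar> = - ?d x" using pd2np[of x] x by auto
          have "\<bar>(u x - u t) * ?d x\<bar> = \<bar>u x - u t\<bar> * (- ?d x)" by (simp only: abs_mult ad)
          also have "\<dots> \<le> \<eta> * (- ?d x)"
            by (rule mult_right_mono) (use lt pd2np[of x] x in auto)
          finally show "\<bar>(u x - u t) * ?d x\<bar> \<le> \<eta> * (- ?d x)" .
        qed
        also have "\<dots> = \<eta>" using intd2 di1[of "t-e" t] by (simp add: integral_neg)
        finally show ?thesis .
      qed
      have E3: "\<bar>integral {s..t} (\<lambda>x. g x * ?\<phi> x) - integral {s..t} g\<bar> \<le> 2 * \<eta>"
      proof -
        let ?k = "\<lambda>x. g x * (?\<phi> x - 1)"
        have ki: "?k integrable_on {s..t}" using st by (intro f2i continuous_intros phic) auto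
        have gi: "g integrable_on {s..t}" using gsub[of s t] st absint_int by auto
        have "integral {s..t} (\<lambda>x. g x * ?\<phi> x) - integral {s..t} g = integral {s..t} ?k"
        proof -
          have gpi: "(\<lambda>x. g x * ?\<phi> x) integrable_on {s..t}" using st by (intro f2i phic) auto
          show ?thesis
            using Henstock_Kurzweil_Integration.integral_diff[OF gpi gi] by (simp add: right_diff_distrib)
        qed
        also have "\<dots> = integral {s..s+e} ?k + integral {s+e..t-e} ?k + integral {t-e..t} ?k"
        proof -
          have i1: "?k integrable_on {s+e..t}" using ed e0 by (intro integrable_on_subinterval[OF ki]) auto
          have "integral {s..t} ?k = integral {s..s+e} ?k + integral {s+e..t} ?k"
            using Henstock_Kurzweil_Integration.integral_combine[of s "s+e" t ?k] ki ed e0 by simp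
          moreover have "integral {s+e..t} ?k = integral {s+e..t-e} ?k + integral {t-e..t} ?k"
            using Henstock_Kurzweil_Integration.integral_combine[of "s+e" "t-e" t ?k] i1 ed e0 by simp
          ultimately show ?thesis by simp
        qed
        also have "integral {s+e..t-e} ?k = 0" by (rule integral_zero_on) (simp add: phi_mid)
        finally have eq: "integral {s..t} (\<lambda>x. g x * ?\<phi> x) - integral {s..t} g = integral {s..s+e} ?k + integral {t-e..t} ?k" by simp
        have bnd: "\<bar>integral {a..b} ?k\<bar> \<le> integral {a..b} (\<lambda>y. \<bar>g y\<bar>)" if "s \<le> a" "a \<le> b" "b \<le> t" for a b
        proof (rule int_abs_bound)
          show "?k integrable_on {a..b}" using that by (intro integrable_on_subinterval[OF ki]) auto
          show "(\<lambda>y. \<bar>g y\<bar>) integrable_on {a..b}" using that st by (intro agi_sub) auto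
          fix x
          have "\<bar>?\<phi> x - 1\<bar> \<le> 1" using phi01[of x] by auto
          then show "\<bar>?k x\<bar> \<le> \<bar>g x\<bar>" by (simp add: abs_mult mult_left_le)
        qed
        have b1: "integral {s..s+e} (\<lambda>y. \<bar>g y\<bar>) < \<eta>"
          using Gdiff[of s "s+e"] d3(2)[of "s+e"] st ed e0 by auto
        have b2: "integral {t-e..t} (\<lambda>y. \<bar>g y\<bar>) < \<eta>"
          using Gdiff[of "t-e" t] d4(2)[of "t-e"] st ed e0 by auto
        show ?thesis using eq bnd[of s "s+e"] bnd[of "t-e" t] b1 b2 st ed e0 by auto
      qed
      show "\<bar>u t - u s - integral {s..t} g\<bar> \<le> 4 * \<eta>"
        using A B id E1 E2 E3 by linarith
    qed
    then show ?thesis by simp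
  qed
qed

lemma weak_ftc:
  fixes u g :: "real \<Rightarrow> real"
  assumes L: "0 < L" and uc: "continuous_on {0..L} u" and H: "H1_weak_deriv 0 L u g"
    and ab: "0 \<le> a" "a \<le> b" "b \<le> L"
  shows "u b - u a = integral {a..b} g"
proof -
  have gA: "g absolutely_integrable_on {0..L}"
    using H absolutely_integrable_on_Icc_iff_Ioo unfolding H1_weak_deriv_def by blast
  have gi: "g integrable_on {0..L}" using gA absint_int by blast
  define G where "G x = integral {0..x} g" for x
  have Gc: "continuous_on {0..L} G" unfolding G_def by (rule indefinite_integral_continuous_1[OF gi])
  have Gdiff: "integral {x..y} g = G y - G x" if "0 \<le> x" "x \<le> y" "y \<le> L" for x y
  proof -
    have "g integrable_on {0..y}" using that by (intro integrable_on_subinterval[OF gi]) auto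
    from Henstock_Kurzweil_Integration.integral_combine[OF that(1,2) this] show ?thesis unfolding G_def by simp
  qed
  define v where "v x = u x - G x" for x
  have vc: "continuous_on {0..L} v" unfolding v_def by (intro continuous_intros uc Gc)
  have vconst: "v x = v (L/2)" if "x \<in> {0<..<L}" for x
  proof -
    consider "x < L/2" | "x = L/2" | "x > L/2" by linarith
    then show ?thesis
    proof cases
      case 1
      then show ?thesis using weak_ftc_interior[OF uc H, of x "L/2"] Gdiff[of x "L/2"] that L
        by (auto simp: v_def)
    next
      case 3
      then show ?thesis using weak_ftc_interior[OF uc H, of "L/2" x] Gdiff[of "L/2" x] that L
        by (auto simp: v_def)
    next
      case 2 then show ?thesis by (simp only:)
    qed
  qed
  have cl: "closure {0<..<L} = {0..L}" using L by simp
  have vall: "v x = v (L/2)" if "x \<in> {0..L}" for x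
  proof -
    have vc': "continuous_on (closure {0<..<L}) v" using vc cl by simp
    have xc: "x \<in> closure {0<..<L}" using that cl by simp
    show ?thesis by (rule continuous_constant_on_closure[OF vc' vconst xc])
  qed
  show ?thesis using vall[of a] vall[of b] Gdiff[OF ab] ab by (auto simp: v_def)
qed

locale ucurve =
  fixes r r' :: "real \<Rightarrow> 'a::euclidean_space" and L :: real
  assumes L: "0 < L"
    and r_deriv: "\<And>s. s \<in> {0..L} \<Longrightarrow> (r has_vector_derivative r' s) (at s within {0..L})"
    and r'_cont: "continuous_on {0..L} r'"
    and unit: "\<And>s. s \<in> {0..L} \<Longrightarrow> norm (r' s) = 1"
    and simple: "\<And>s1 s2. s1 \<in> {0..L} \<Longrightarrow> s2 \<in> {0..L} \<Longrightarrow> s1 < s2 \<Longrightarrow> r s1 = r s2 \<Longrightarrow> s1 = 0 \<and> s2 = L"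
    and closed_tangent: "r 0 = r L \<Longrightarrow> r' 0 = r' L"
begin

lemma r_cont: "continuous_on {0..L} r"
  using r_deriv has_vector_derivative_continuous continuous_on_eq_continuous_within by blast

lemma local_lin:
  assumes "\<epsilon> > 0"
  shows "\<exists>\<eta>>0. \<forall>x\<in>{0..L}. \<forall>y\<in>{0..L}. \<bar>y - x\<bar> < \<eta> \<longrightarrow> norm (r y - r x - (y - x) *\<^sub>R r' x) \<le> \<epsilon> * \<bar>y - x\<bar>"
proof -
  have "uniformly_continuous_on {0..L} r'"
    using compact_uniformly_continuous[OF r'_cont] by simp
  then obtain d where d: "d > 0" "\<And>x x'. x \<in> {0..L} \<Longrightarrow> x' \<in> {0..L} \<Longrightarrow> dist x' x < d \<Longrightarrow> dist (r' x') (r' x) < \<epsilon>"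
    unfolding uniformly_continuous_on_def using assms by metis
  show ?thesis
  proof (intro exI[of _ d] conjI ballI impI)
    show "d > 0" by (rule d(1))
    fix x y assume x: "x \<in> {0..L}" and y: "y \<in> {0..L}" and xy: "\<bar>y - x\<bar> < d"
    let ?S = "closed_segment x y"
    have Ssub: "?S \<subseteq> {0..L}" using x y by (auto simp: closed_segment_eq_real_ivl split: if_splits)
    have p1: "(r has_vector_derivative r' z) (at z within ?S)" if z: "z \<in> ?S" for z
      using has_vector_derivative_within_subset[OF r_deriv Ssub] z Ssub by auto
    have p2: "norm (r' z - r' x) \<le> \<epsilon>" if z: "z \<in> ?S" for z
    proof -
      have "\<bar>z - x\<bar> \<le> \<bar>y - x\<bar>" using z by (auto simp: closed_segment_eq_real_ivl split: if_splits)
      then have "dist (r' z) (r' x) < \<epsilon>" using d(2)[of x z] z Ssub x xy by (auto simp: dist_real_def)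
      then show "norm (r' z - r' x) \<le> \<epsilon>" by (simp add: dist_norm)
    qed
    have p3: "x \<in> ?S" by simp
    have "norm (r y - r x - (y - x) *\<^sub>R r' x) \<le> norm (y - x) * \<epsilon>"
      using vector_differentiable_bound_linearization[OF p1 order_refl p2 p3] by simp
    then show "norm (r y - r x - (y - x) *\<^sub>R r' x) \<le> \<epsilon> * \<bar>y - x\<bar>" by (simp add: mult.commute)
  qed
qed

lemma norm_lower:
  fixes a b :: "'a" and t :: real
  assumes "norm (b - t *\<^sub>R v) \<le> e" "norm v = 1"
  shows "norm b \<ge> \<bar>t\<bar> - e"
proof -
  have "norm (t *\<^sub>R v) \<le> norm b + norm (b - t *\<^sub>R v)"
    by (metis add_diff_cancel_left' diff_add_cancel norm_minus_commute norm_triangle_ineq4)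
  then show ?thesis using assms by simp
qed

lemma pairs:
  assumes c: "c > 1"
  shows "\<exists>\<delta>>0. c * \<delta> < L / 4 \<and> (\<forall>x\<in>{0..L}. \<forall>y\<in>{0..L}. dist (r x) (r y) \<le> \<delta> \<longrightarrow>
            \<bar>x - y\<bar> \<le> c * dist (r x) (r y) \<or> L - \<bar>x - y\<bar> \<le> c * dist (r x) (r y))"
proof -
  define \<epsilon> where "\<epsilon> = 1 - 1/c"
  have \<epsilon>: "\<epsilon> > 0" "1 - \<epsilon> = 1/c" using c by (auto simp: \<epsilon>_def)
  obtain \<eta>0 where \<eta>0: "\<eta>0 > 0" "\<And>x y. x\<in>{0..L} \<Longrightarrow> y\<in>{0..L} \<Longrightarrow> \<bar>y - x\<bar> < \<eta>0 \<Longrightarrow>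
      norm (r y - r x - (y - x) *\<^sub>R r' x) \<le> \<epsilon> * \<bar>y - x\<bar>"
    using local_lin[OF \<epsilon>(1)] by blast
  define \<eta> where "\<eta> = min \<eta>0 (L/2)"
  have \<eta>: "\<eta> > 0" "\<eta> \<le> \<eta>0" "\<eta> \<le> L/2" using \<eta>0 L by (auto simp: \<eta>_def)
  have near: "\<bar>x - y\<bar> \<le> c * dist (r x) (r y)" if "x\<in>{0..L}" "y\<in>{0..L}" "\<bar>x - y\<bar> < \<eta>" for x y
  proof -
    have "norm (r y - r x - (y - x) *\<^sub>R r' x) \<le> \<epsilon> * \<bar>y - x\<bar>" using \<eta>0(2)[of x y] that \<eta> by auto
    from norm_lower[OF this unit[OF that(1)]] have "norm (r y - r x) \<ge> \<bar>y - x\<bar> * (1 - \<epsilon>)"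
      by (simp add: algebra_simps)
    then have "norm (r y - r x) \<ge> \<bar>y - x\<bar> / c" using \<epsilon> by simp
    then show ?thesis using c by (simp add: dist_norm norm_minus_commute field_simps abs_minus_commute)
  qed
  have wrap: "L - y + x \<le> c * dist (r x) (r y)"
    if "x\<in>{0..L}" "y\<in>{0..L}" "x < \<eta>" "L - y < \<eta>" "r 0 = r L" for x y
  proof -
    have L0: "0 \<in> {0..L}" "L \<in> {0..L}" using L by auto
    have e1: "norm (r x - r 0 - x *\<^sub>R r' 0) \<le> \<epsilon> * x" using \<eta>0(2)[of 0 x] that \<eta> L0 by auto
    have e2: "norm (r y - r L - (y - L) *\<^sub>R r' L) \<le> \<epsilon> * (L - y)" using \<eta>0(2)[of L y] that \<eta> L0 by auto
    have tL: "r' L = r' 0" "r L = r 0" using that(5) closed_tangent[OF that(5)] by auto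
    have eq: "r y - r x - (y - L - x) *\<^sub>R r' 0 = (r y - r L - (y - L) *\<^sub>R r' L) - (r x - r 0 - x *\<^sub>R r' 0)"
      unfolding tL by (simp add: scaleR_diff_left)
    have tri: "norm ((r y - r L - (y - L) *\<^sub>R r' L) - (r x - r 0 - x *\<^sub>R r' 0))
        \<le> norm (r y - r L - (y - L) *\<^sub>R r' L) + norm (r x - r 0 - x *\<^sub>R r' 0)"
      by (rule norm_triangle_ineq4)
    have "norm (r y - r x - (y - L - x) *\<^sub>R r' 0) \<le> \<epsilon> * x + \<epsilon> * (L - y)"
      unfolding eq using tri e1 e2 by linarith
    from norm_lower[OF this unit[OF L0(1)]]
    have "norm (r y - r x) \<ge> (L - y + x) * (1 - \<epsilon>)" using that by (simp add: algebra_simps)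
    then have "norm (r y - r x) \<ge> (L - y + x) / c" using \<epsilon> by simp
    then show ?thesis using c by (simp add: dist_norm norm_minus_commute field_simps)
  qed
  define cl where "cl = (r 0 = r L)"
  define K where "K = {p \<in> {0..L} \<times> {0..L}. \<eta> \<le> \<bar>fst p - snd p\<bar> \<and> (cl \<longrightarrow> \<bar>fst p - snd p\<bar> \<le> L - \<eta>)}"
  have Kc: "compact K"
  proof -
    have cb: "compact ({0..L} \<times> {0..L} :: (real \<times> real) set)" by (intro compact_Times) auto
    have cl1: "closed {p :: real \<times> real. \<eta> \<le> \<bar>fst p - snd p\<bar>}"
      by (intro closed_Collect_le continuous_intros)
    have cl2: "closed {p :: real \<times> real. cl \<longrightarrow> \<bar>fst p - snd p\<bar> \<le> L - \<eta>}"
    proof (cases cl)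
      case True then show ?thesis by simp (intro closed_Collect_le continuous_intros)
    next
      case False then show ?thesis by simp
    qed
    have "K = ({0..L} \<times> {0..L}) \<inter> ({p. \<eta> \<le> \<bar>fst p - snd p\<bar>} \<inter> {p. cl \<longrightarrow> \<bar>fst p - snd p\<bar> \<le> L - \<eta>})"
      by (auto simp: K_def)
    then show ?thesis using cb cl1 cl2 by (simp only:) (intro compact_Int_closed closed_Int)
  qed
  have rK: "r (fst p) \<noteq> r (snd p)" if "p \<in> K" for p
  proof
    assume eq: "r (fst p) = r (snd p)"
    obtain x y where p: "p = (x, y)" by fastforce
    have xy: "x \<in> {0..L}" "y \<in> {0..L}" "\<eta> \<le> \<bar>x - y\<bar>" "cl \<Longrightarrow> \<bar>x - y\<bar> \<le> L - \<eta>"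
      using that by (auto simp: K_def p)
    have "x \<noteq> y" using xy \<eta> by auto
    then consider "x < y" | "y < x" by linarith
    then show False
    proof cases
      case 1
      then have "x = 0" "y = L" using simple[of x y] xy eq p by auto
      then show False using xy eq p \<eta> by (auto simp: cl_def)
    next
      case 2
      then have "y = 0" "x = L" using simple[of y x] xy eq p by auto
      then show False using xy eq p \<eta> by (auto simp: cl_def)
    qed
  qed
  obtain m where m: "m > 0" "\<And>p. p \<in> K \<Longrightarrow> m \<le> dist (r (fst p)) (r (snd p))"
  proof (cases "K = {}")
    case True then show ?thesis using that[of 1] by auto
  next
    case False
    have "continuous_on K (\<lambda>p. dist (r (fst p)) (r (snd p)))"
    proof -
      have sub: "K \<subseteq> {0..L} \<times> {0..L}" by (auto simp: K_def)
      have "continuous_on K (\<lambda>p. r (fst p))"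
        using sub by (intro continuous_on_compose2[OF r_cont] continuous_intros) auto
      moreover have "continuous_on K (\<lambda>p. r (snd p))"
        using sub by (intro continuous_on_compose2[OF r_cont] continuous_intros) auto
      ultimately show ?thesis by (intro continuous_intros)
    qed
    then obtain p0 where p0: "p0 \<in> K" "\<And>p. p \<in> K \<Longrightarrow> dist (r (fst p0)) (r (snd p0)) \<le> dist (r (fst p)) (r (snd p))"
      using continuous_attains_inf[OF Kc False] by blast
    show ?thesis using that[of "dist (r (fst p0)) (r (snd p0))"] p0 rK[OF p0(1)] by auto
  qed
  define \<delta> where "\<delta> = min (m/2) (L / (8 * c))"
  have \<delta>: "\<delta> > 0" "\<delta> < m" "c * \<delta> < L / 4"
  proof -
    show "\<delta> > 0" using m L c by (simp add: \<delta>_def)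
    show "\<delta> < m" using m by (simp add: \<delta>_def)
    have "\<delta> \<le> L / (8 * c)" by (simp add: \<delta>_def)
    then have "c * \<delta> \<le> c * (L / (8 * c))" using c by (intro mult_left_mono) auto
    also have "\<dots> = L / 8" using c by simp
    finally show "c * \<delta> < L / 4" using L by simp
  qed
  show ?thesis
  proof (intro exI[of _ \<delta>] conjI ballI impI)
    show "\<delta> > 0" "c * \<delta> < L / 4" using \<delta> by auto
    fix x y assume x: "x \<in> {0..L}" and y: "y \<in> {0..L}" and d: "dist (r x) (r y) \<le> \<delta>"
    have "(x, y) \<notin> K" using m(2)[of "(x,y)"] d \<delta> by auto
    then have "\<bar>x - y\<bar> < \<eta> \<or> (cl \<and> \<bar>x - y\<bar> > L - \<eta>)" using x y by (auto simp: K_def)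
    then show "\<bar>x - y\<bar> \<le> c * dist (r x) (r y) \<or> L - \<bar>x - y\<bar> \<le> c * dist (r x) (r y)"
    proof
      assume "\<bar>x - y\<bar> < \<eta>" then show ?thesis using near[OF x y] by auto
    next
      assume h: "cl \<and> \<bar>x - y\<bar> > L - \<eta>"
      show ?thesis
      proof (cases "x \<le> y")
        case True
        then have "L - \<bar>x - y\<bar> = L - y + x" by simp
        moreover have "L - y + x \<le> c * dist (r x) (r y)" using h True x y by (intro wrap) (auto simp: cl_def)
        ultimately show ?thesis by simp
      next
        case False
        then have "L - \<bar>x - y\<bar> = L - x + y" by simp
        moreover have "L - x + y \<le> c * dist (r y) (r x)" using h False x y by (intro wrap) (auto simp: cl_def)
        ultimately show ?thesis by (simp add: dist_commute)
      qed
    qed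
  qed
qed

lemma cover:
  assumes c: "c > 1"
  shows "\<exists>\<delta>>0. \<forall>P D. P \<subseteq> {0..L} \<longrightarrow> 0 \<le> D \<longrightarrow> D \<le> \<delta> \<longrightarrow> (\<forall>x\<in>P. \<forall>y\<in>P. dist (r x) (r y) \<le> D) \<longrightarrow>
      (\<exists>a1 b1 a2 b2. a1 \<le> b1 \<and> a2 \<le> b2 \<and> P \<subseteq> {a1..b1} \<union> {a2..b2} \<and> (b1 - a1) + (b2 - a2) \<le> c * D)"
proof -
  obtain \<delta> where \<delta>: "\<delta> > 0" "c * \<delta> < L / 4"
    "\<And>x y. x\<in>{0..L} \<Longrightarrow> y\<in>{0..L} \<Longrightarrow> dist (r x) (r y) \<le> \<delta> \<Longrightarrow>
            \<bar>x - y\<bar> \<le> c * dist (r x) (r y) \<or> L - \<bar>x - y\<bar> \<le> c * dist (r x) (r y)"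
    using pairs[OF c] by blast
  show ?thesis
  proof (rule exI[of _ \<delta>], intro conjI allI impI)
    show "\<delta> > 0" by (rule \<delta>(1))
    fix P D assume P: "P \<subseteq> {0..L}" and D0: "0 \<le> D" and D: "D \<le> \<delta>"
      and pw: "\<forall>x\<in>P. \<forall>y\<in>P. dist (r x) (r y) \<le> D"
    define E where "E = c * D"
    have E0: "0 \<le> E" using D0 c by (simp add: E_def)
    have EL: "E < L / 4"
    proof -
      have "c * D \<le> c * \<delta>" using D c by (intro mult_left_mono) auto
      then show ?thesis using \<delta>(2) by (simp add: E_def)
    qed
    have pr: "\<bar>x - y\<bar> \<le> E \<or> L - \<bar>x - y\<bar> \<le> E" if "x \<in> P" "y \<in> P" for x y
    proof -
      have dd: "dist (r x) (r y) \<le> D" using pw that by auto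
      have cd: "c * dist (r x) (r y) \<le> E" unfolding E_def using dd c by (intro mult_left_mono) auto
      show ?thesis using \<delta>(3)[of x y] that P dd D cd by force
    qed
    have bdd: "bdd_below A \<and> bdd_above A" if "A \<subseteq> P" for A
    proof
      show "bdd_below A" using that P by (intro bdd_belowI[of _ 0]) auto
      show "bdd_above A" using that P by (intro bdd_aboveI[of _ L]) auto
    qed
    show "\<exists>a1 b1 a2 b2. a1 \<le> b1 \<and> a2 \<le> b2 \<and> P \<subseteq> {a1..b1} \<union> {a2..b2} \<and> (b1 - a1) + (b2 - a2) \<le> c * D"
    proof (cases "P = {}")
      case True then show ?thesis using E0 by (intro exI[of _ 0]) (auto simp: E_def)
    next
      case Pne: False
      show ?thesis
      proof (cases "\<forall>x\<in>P. \<forall>y\<in>P. \<bar>x - y\<bar> \<le> E")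
        case True
        define p0 where "p0 = Inf P"
        have "P \<subseteq> {p0..p0 + E}"
        proof
          fix t assume t: "t \<in> P"
          have "p0 \<le> t" unfolding p0_def using t bdd[of P] by (auto intro: cInf_lower)
          moreover have "t - E \<le> p0" unfolding p0_def
            using True t Pne by (intro cInf_greatest) force+
          ultimately show "t \<in> {p0..p0 + E}" by auto
        qed
        then show ?thesis using E0
          by (intro exI[of _ p0] exI[of _ "p0 + E"]) (auto simp: E_def)
      next
        case False
        then obtain x1 y1 where xy1: "x1 \<in> P" "y1 \<in> P" "\<bar>x1 - y1\<bar> > E" by force
        obtain x0 y0 where xy: "x0 \<in> P" "y0 \<in> P" "x0 < y0" "y0 - x0 > E"
        proof (cases "x1 < y1")
          case True then show ?thesis using that[of x1 y1] xy1 by auto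
        next
          case False then show ?thesis using that[of y1 x1] xy1 E0 by auto
        qed
        have wr: "L - (y0 - x0) \<le> E" using pr[OF xy(1,2)] xy by auto
        have x0L: "x0 \<le> L / 2" "0 \<le> x0" using wr xy P EL by auto
        have y0L: "y0 > L / 2" "y0 \<le> L" using wr xy P EL by auto
        define P1 where "P1 = P \<inter> {..L/2}"
        define P2 where "P2 = P \<inter> {L/2<..}"
        have x0P1: "x0 \<in> P1" using xy x0L by (simp add: P1_def)
        have y0P2: "y0 \<in> P2" using xy y0L by (simp add: P2_def)
        have cross: "p \<le> q - (L - E)" if p: "p \<in> P1" and q: "q \<in> P2" for p q
        proof -
          have pp: "p \<in> P" "0 \<le> p" "p \<le> L / 2" using p P by (auto simp: P1_def)
          have qq: "q \<in> P" "L / 2 < q" "q \<le> L" using q P by (auto simp: P2_def)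
          have "\<bar>p - x0\<bar> \<le> E" using pr[OF pp(1) xy(1)] pp x0L EL by auto
          moreover have "\<bar>q - y0\<bar> \<le> E" using pr[OF qq(1) xy(2)] qq y0L EL by auto
          moreover have "\<not> \<bar>p - q\<bar> \<le> E"
          proof
            assume "\<bar>p - q\<bar> \<le> E"
            with calculation have "y0 - x0 \<le> 3 * E" by auto
            then show False using wr EL by auto
          qed
          ultimately show ?thesis using pr[OF pp(1) qq(1)] pp qq by auto
        qed
        have P1ne: "P1 \<noteq> {}" and P2ne: "P2 \<noteq> {}" using x0P1 y0P2 by auto
        have b1: "Sup P1 \<le> q - (L - E)" if "q \<in> P2" for q
          using cross that P1ne by (intro cSup_least) auto
        have b2: "Sup P1 + (L - E) \<le> Inf P2"
          using b1 P2ne by (intro cInf_greatest) force+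
        have sub: "P \<subseteq> {0..Sup P1} \<union> {Inf P2..L}"
        proof
          fix p assume p: "p \<in> P"
          show "p \<in> {0..Sup P1} \<union> {Inf P2..L}"
          proof (cases "p \<le> L / 2")
            case True
            then have "p \<in> P1" using p by (simp add: P1_def)
            then have "p \<le> Sup P1" using bdd[of P1] by (auto simp: P1_def intro: cSup_upper)
            then show ?thesis using p P by auto
          next
            case False
            then have "p \<in> P2" using p by (simp add: P2_def)
            then have "Inf P2 \<le> p" using bdd[of P2] by (auto simp: P2_def intro: cInf_lower)
            then show ?thesis using p P by auto
          qed
        qed
        have s1: "0 \<le> Sup P1"
          using x0P1 x0L bdd[of P1] by (auto simp: P1_def intro: order_trans[OF _ cSup_upper])
        have s2: "Inf P2 \<le> L"
          using y0P2 y0L bdd[of P2] by (auto simp: P2_def intro: order_trans[OF cInf_lower])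
        show ?thesis
          using sub s1 s2 b2
          by (intro exI[of _ 0] exI[of _ "Sup P1"] exI[of _ "Inf P2"] exI[of _ L]) (auto simp: E_def)
      qed
    qed
  qed
qed

lemma haus_lower_c:
  assumes S: "S \<subseteq> {0..L}" "S \<in> sets lborel" and c: "c > 1"
  shows "ennreal (measure lborel S / c) \<le> hausdorff1 (r ` S)"
proof -
  obtain \<delta> where \<delta>: "\<delta> > 0" "\<And>P D. P \<subseteq> {0..L} \<Longrightarrow> 0 \<le> D \<Longrightarrow> D \<le> \<delta> \<Longrightarrow> (\<forall>x\<in>P. \<forall>y\<in>P. dist (r x) (r y) \<le> D) \<Longrightarrow>
      (\<exists>a1 b1 a2 b2. a1 \<le> b1 \<and> a2 \<le> b2 \<and> P \<subseteq> {a1..b1} \<union> {a2..b2} \<and> (b1 - a1) + (b2 - a2) \<le> c * D)"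
    using cover[OF c] by blast
  have fin: "emeasure lborel S = ennreal (measure lborel S)"
  proof (rule emeasure_eq_ennreal_measure)
    have "emeasure lborel S \<le> emeasure lborel {0..L}" using S by (intro emeasure_mono) auto
    then show "emeasure lborel S \<noteq> top" using L by (auto simp: top_unique)
  qed
  have key: "ennreal (measure lborel S / c) \<le> (\<Sum>i. ennreal (diameter (C i)))"
    if C: "r ` S \<subseteq> (\<Union>i. C i)" "\<forall>i. bounded (C i) \<and> diameter (C i) \<le> \<delta>" for C :: "nat \<Rightarrow> 'a set"
  proof -
    define P where "P i = {s \<in> {0..L}. r s \<in> C i}" for i
    have ex: "\<exists>a1 b1 a2 b2. a1 \<le> b1 \<and> a2 \<le> b2 \<and> P i \<subseteq> {a1..b1} \<union> {a2..b2} \<and> (b1 - a1) + (b2 - a2) \<le> c * diameter (C i)" for i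
    proof (rule \<delta>(2))
      show "P i \<subseteq> {0..L}" by (auto simp: P_def)
      show "0 \<le> diameter (C i)" using C by (simp add: diameter_ge_0)
      show "diameter (C i) \<le> \<delta>" using C by simp
      show "\<forall>x\<in>P i. \<forall>y\<in>P i. dist (r x) (r y) \<le> diameter (C i)"
        using C by (auto simp: P_def intro: diameter_bounded_bound)
    qed
    obtain A1 B1 A2 B2 where AB: "\<And>i. A1 i \<le> B1 i \<and> A2 i \<le> B2 i \<and> P i \<subseteq> {A1 i..B1 i} \<union> {A2 i..B2 i}
        \<and> (B1 i - A1 i) + (B2 i - A2 i) \<le> c * diameter (C i)"
      using ex by metis
    define U where "U i = {A1 i..B1 i} \<union> {A2 i..B2 i}" for i
    have SU: "S \<subseteq> (\<Union>i. U i)"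
    proof
      fix s assume s: "s \<in> S"
      then obtain i where "r s \<in> C i" using C by blast
      then have "s \<in> P i" using s S by (auto simp: P_def)
      then have "s \<in> U i" using AB[of i] by (auto simp: U_def)
      then show "s \<in> (\<Union>i. U i)" by blast
    qed
    have Ule: "emeasure lborel (U i) \<le> ennreal (c * diameter (C i))" for i
    proof -
      have "emeasure lborel (U i) \<le> emeasure lborel {A1 i..B1 i} + emeasure lborel {A2 i..B2 i}"
        unfolding U_def by (rule emeasure_subadditive) auto
      also have "\<dots> = ennreal ((B1 i - A1 i) + (B2 i - A2 i))" using AB[of i] by (simp add: ennreal_plus)
      also have "\<dots> \<le> ennreal (c * diameter (C i))" using AB[of i] by (intro ennreal_leI) auto
      finally show ?thesis .
    qed
    have "ennreal (measure lborel S) = emeasure lborel S" using fin by simp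
    also have "\<dots> \<le> emeasure lborel (\<Union>i. U i)" using SU by (intro emeasure_mono) (auto simp: U_def)
    also have "\<dots> \<le> (\<Sum>i. emeasure lborel (U i))" by (intro emeasure_subadditive_countably) (auto simp: U_def)
    also have "\<dots> \<le> (\<Sum>i. ennreal (c * diameter (C i)))" using Ule by (intro suminf_le summableI) auto
    also have "\<dots> = (\<Sum>i. ennreal c * ennreal (diameter (C i)))"
      using C c by (simp add: ennreal_mult diameter_ge_0)
    also have "\<dots> = ennreal c * (\<Sum>i. ennreal (diameter (C i)))" by simp
    finally have le: "ennreal (measure lborel S) \<le> ennreal c * (\<Sum>i. ennreal (diameter (C i)))" .
    show ?thesis
    proof (cases "(\<Sum>i. ennreal (diameter (C i))) = top")
      case True then show ?thesis by simp
    next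
      case False
      then obtain x where x: "(\<Sum>i. ennreal (diameter (C i))) = ennreal x" "0 \<le> x"
        by (cases "(\<Sum>i. ennreal (diameter (C i)))") auto
      have "ennreal (measure lborel S) \<le> ennreal (c * x)" using le x c by (simp add: ennreal_mult)
      then have "measure lborel S \<le> c * x" using x c by (subst (asm) ennreal_le_iff) auto
      then have "measure lborel S / c \<le> x" using c by (simp add: field_simps)
      then show ?thesis using x by simp
    qed
  qed
  have "ennreal (measure lborel S / c) \<le> hausdorff1_pre \<delta> (r ` S)"
    unfolding hausdorff1_pre_def by (rule INF_greatest) (use key in auto)
  also have "\<dots> \<le> hausdorff1 (r ` S)"
    unfolding hausdorff1_def using \<delta>(1) by (intro SUP_upper) auto
  finally show ?thesis .
qed

lemma haus_lower:
  assumes S: "S \<subseteq> {0..L}" "S \<in> sets lborel"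
  shows "ennreal (measure lborel S) \<le> hausdorff1 (r ` S)"
proof (cases "hausdorff1 (r ` S) = top")
  case True then show ?thesis by simp
next
  case False
  then obtain h where h: "hausdorff1 (r ` S) = ennreal h" "0 \<le> h"
    by (cases "hausdorff1 (r ` S)") auto
  define m where "m = measure lborel S"
  have m0: "0 \<le> m" by (simp add: m_def)
  have mc: "m / c \<le> h" if "c > 1" for c
    using haus_lower_c[OF S that] h by (simp add: m_def)
  have "m \<le> h"
  proof (rule ccontr)
    assume "\<not> m \<le> h"
    then have mh: "m > h" by simp
    define c where "c = 2 * m / (m + h)"
    have c1: "c > 1" using mh h by (simp add: c_def field_simps)
    have "m / c = (m + h) / 2" using mh h by (simp add: c_def field_simps)
    then show False using mc[OF c1] mh by simp
  qed
  then show ?thesis using h by (simp add: m_def)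
qed

end

lemma path_right:
  fixes u :: "real \<Rightarrow> real"
  assumes uc: "continuous_on {0..L} u"
    and bnd: "\<And>x. x \<in> {0..L} \<Longrightarrow> w0 \<le> u x \<and> u x \<le> w1"
    and t0: "t0 \<in> {0..L}" "u t0 = w0"
    and s: "s \<in> {0..L}" "w0 < u s" "u s < w1" "s < t0"
  shows "\<exists>a b. 0 \<le> a \<and> a \<le> b \<and> b \<le> L \<and> {a<..<b} \<subseteq> {x\<in>{0..L}. w0 < u x \<and> u x < w1} \<and> u s - w0 \<le> u a - u b"
proof -
  have ucs: "continuous_on {s..t0} u" using s t0 by (intro continuous_on_subset[OF uc]) auto
  define Z where "Z = {t \<in> {s..t0}. u t = w0}"
  have Zc: "closed Z" unfolding Z_def by (rule continuous_closed_preimage_constant[OF ucs]) auto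
  have Zne: "Z \<noteq> {}" using t0 s by (auto simp: Z_def)
  have Zb: "bdd_below Z" by (auto simp: Z_def intro: bdd_belowI[of _ s])
  define p where "p = Inf Z"
  have pZ: "p \<in> Z" unfolding p_def by (rule closed_contains_Inf[OF Zne Zb Zc])
  then have p: "s \<le> p" "p \<le> t0" "u p = w0" by (auto simp: Z_def)
  have ps: "s < p" using p s by (metis order_le_less less_irrefl)
  have notw0: "u x \<noteq> w0" if "s \<le> x" "x < p" for x
  proof
    assume "u x = w0"
    then have "x \<in> Z" using that p by (auto simp: Z_def)
    then have "p \<le> x" unfolding p_def using Zb by (rule cInf_lower)
    then show False using that by simp
  qed
  define Y where "Y = {t \<in> {s..p}. u t = w1}"
  obtain q where q: "s \<le> q" "q < p" "u s \<le> u q" "\<And>x. q < x \<Longrightarrow> x \<le> p \<Longrightarrow> u x \<noteq> w1"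
  proof (cases "Y = {}")
    case True
    show ?thesis
    proof (rule that[of s])
      show "s \<le> s" "s < p" "u s \<le> u s" by (auto simp: ps)
      fix x assume "s < x" "x \<le> p"
      then show "u x \<noteq> w1" using True by (auto simp: Y_def)
    qed
  next
    case False
    have ucp: "continuous_on {s..p} u" using s t0 p by (intro continuous_on_subset[OF uc]) auto
    have Yc: "closed Y" unfolding Y_def by (rule continuous_closed_preimage_constant[OF ucp]) auto
    have Yb: "bdd_above Y" by (auto simp: Y_def intro: bdd_aboveI[of _ p])
    define q where "q = Sup Y"
    have qY: "q \<in> Y" unfolding q_def by (rule closed_contains_Sup[OF False Yb Yc])
    then have qq: "s \<le> q" "q \<le> p" "u q = w1" by (auto simp: Y_def)
    have "q \<noteq> p" using qq p s by auto
    show ?thesis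
    proof (rule that[of q])
      show "s \<le> q" "q < p" using qq \<open>q \<noteq> p\<close> by auto
      show "u s \<le> u q" using qq s by simp
      fix x assume x: "q < x" "x \<le> p"
      show "u x \<noteq> w1"
      proof
        assume "u x = w1"
        then have "x \<in> Y" using x qq by (auto simp: Y_def)
        then have "x \<le> q" unfolding q_def using Yb by (rule cSup_upper)
        then show False using x by simp
      qed
    qed
  qed
  show ?thesis
  proof (rule exI[of _ q], rule exI[of _ p], intro conjI)
    show "0 \<le> q" "q \<le> p" "p \<le> L" using q s p t0 by auto
    show "{q<..<p} \<subseteq> {x \<in> {0..L}. w0 < u x \<and> u x < w1}"
    proof
      fix x assume x: "x \<in> {q<..<p}"
      then have xL: "x \<in> {0..L}" using q s p t0 by auto
      have "u x \<noteq> w0" using notw0[of x] x q by auto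
      moreover have "u x \<noteq> w1" using q(4)[of x] x by auto
      ultimately show "x \<in> {x \<in> {0..L}. w0 < u x \<and> u x < w1}" using bnd[OF xL] xL by auto
    qed
    show "u s - w0 \<le> u q - u p" using q p by simp
  qed
qed

lemma path_any:
  fixes u :: "real \<Rightarrow> real"
  assumes uc: "continuous_on {0..L} u"
    and bnd: "\<And>x. x \<in> {0..L} \<Longrightarrow> w0 \<le> u x \<and> u x \<le> w1"
    and t0: "t0 \<in> {0..L}" "u t0 = w0"
    and s: "s \<in> {0..L}" "w0 < u s" "u s < w1"
  shows "\<exists>a b. 0 \<le> a \<and> a \<le> b \<and> b \<le> L \<and> {a<..<b} \<subseteq> {x\<in>{0..L}. w0 < u x \<and> u x < w1} \<and> u s - w0 \<le> \<bar>u b - u a\<bar>"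
proof (cases "s < t0")
  case True
  then show ?thesis using path_right[OF uc bnd t0 s True] by force
next
  case False
  then have st: "L - s < L - t0" using s t0 by (cases "s = t0") auto
  define v where "v x = u (L - x)" for x
  have vc: "continuous_on {0..L} v"
    unfolding v_def by (intro continuous_on_compose2[OF uc] continuous_intros) auto
  have vb: "\<And>x. x \<in> {0..L} \<Longrightarrow> w0 \<le> v x \<and> v x \<le> w1" using bnd by (auto simp: v_def)
  obtain a b where ab: "0 \<le> a" "a \<le> b" "b \<le> L" "{a<..<b} \<subseteq> {x\<in>{0..L}. w0 < v x \<and> v x < w1}"
    "v (L - s) - w0 \<le> v a - v b"
    using path_right[OF vc vb, of "L - t0" "L - s"] t0 s st by (auto simp: v_def)
  show ?thesis
  proof (rule exI[of _ "L - b"], rule exI[of _ "L - a"], intro conjI)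
    show "0 \<le> L - b" "L - b \<le> L - a" "L - a \<le> L" using ab by auto
    show "{L - b<..<L - a} \<subseteq> {x \<in> {0..L}. w0 < u x \<and> u x < w1}"
    proof
      fix x assume x: "x \<in> {L - b<..<L - a}"
      then have "L - x \<in> {a<..<b}" by auto
      then show "x \<in> {x \<in> {0..L}. w0 < u x \<and> u x < w1}" using ab(4) by (auto simp: v_def)
    qed
    show "u s - w0 \<le> \<bar>u (L - a) - u (L - b)\<bar>" using ab(5) by (simp add: v_def)
  qed
qed

lemma quad_cs:
  fixes A B m :: real
  assumes q: "\<And>k. 0 \<le> A - 2 * k * B + k^2 * m" and m: "0 \<le> m"
  shows "B^2 \<le> m * A"
proof (cases "m = 0")
  case True
  have "B = 0"
  proof (rule ccontr)
    assume "B \<noteq> 0"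
    have "0 \<le> A - 2 * ((\<bar>A\<bar> + 1) / (2 * B)) * B" using q[of "(\<bar>A\<bar> + 1) / (2 * B)"] True by simp
    also have "\<dots> = A - (\<bar>A\<bar> + 1)" using \<open>B \<noteq> 0\<close> by (simp add: field_simps)
    finally show False by linarith
  qed
  then show ?thesis using True by simp
next
  case False
  then have mp: "m > 0" using m by simp
  have "0 \<le> A - 2 * (B / m) * B + (B / m)^2 * m" by (rule q)
  also have "\<dots> = A - B^2 / m" using mp by (simp add: field_simps power2_eq_square)
  finally have "B^2 / m \<le> A" by simp
  then show ?thesis using mp by (simp add: field_simps mult.commute)
qed

theorem corollary2p2:
  fixes r r' :: "real \<Rightarrow> 'a::euclidean_space"
    and L :: real and w :: "'a \<Rightarrow> real" and g :: "real \<Rightarrow> real"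
  assumes dim: "DIM('a) \<ge> 2"
    and L: "0 < L"
    and r_deriv: "\<And>s. s \<in> {0..L} \<Longrightarrow> (r has_vector_derivative r' s) (at s within {0..L})"
    and r'_cont: "continuous_on {0..L} r'"
    and unit: "\<And>s. s \<in> {0..L} \<Longrightarrow> norm (r' s) = 1"
    and simple: "\<And>s1 s2. s1 \<in> {0..L} \<Longrightarrow> s2 \<in> {0..L} \<Longrightarrow> s1 < s2 \<Longrightarrow> r s1 = r s2 \<Longrightarrow> s1 = 0 \<and> s2 = L"
    and closed_tangent: "r 0 = r L \<Longrightarrow> r' 0 = r' L"
    and w_cont: "continuous_on (r ` {0..L}) w"
    and w_H1: "H1_weak_deriv 0 L (w \<circ> r) g"
  shows "let \<Gamma> = r ` {0..L};
             w0 = Inf (w ` \<Gamma>); w1 = Sup (w ` \<Gamma>);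
             \<Gamma>t = {x \<in> \<Gamma>. w0 < w x \<and> w x < w1};
             S = {s \<in> {0..L}. r s \<in> \<Gamma>t}
         in ennreal (integral S (\<lambda>s. (w (r s) - w0)\<^sup>2))
              \<le> (hausdorff1 \<Gamma>t)\<^sup>2 * ennreal (integral S (\<lambda>s. (g s)\<^sup>2))"
proof -
  interpret uc: ucurve r r' L
    by unfold_locales (use L r_deriv r'_cont unit simple closed_tangent in auto)
  define u where "u = w \<circ> r"
  have uc: "continuous_on {0..L} u"
    unfolding u_def by (rule continuous_on_compose[OF uc.r_cont w_cont])
  have H: "H1_weak_deriv 0 L u g" using w_H1 by (simp add: u_def)
  have img: "w ` r ` {0..L} = u ` {0..L}" by (simp add: u_def image_comp)
  define w0 where "w0 = Inf (u ` {0..L})"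
  define w1 where "w1 = Sup (u ` {0..L})"
  have cpt: "compact (u ` {0..L})" by (rule compact_continuous_image[OF uc]) simp
  obtain t0 where t0: "t0 \<in> {0..L}" "\<And>x. x \<in> {0..L} \<Longrightarrow> u t0 \<le> u x"
    using continuous_attains_inf[OF _ _ uc] L by fastforce
  have w0t: "w0 = u t0" unfolding w0_def using t0 by (intro cInf_eq_minimum) auto
  have bnd: "w0 \<le> u x \<and> u x \<le> w1" if "x \<in> {0..L}" for x
  proof
    show "w0 \<le> u x" using t0 that w0t by simp
    have "bdd_above (u ` {0..L})" using cpt by (intro bounded_imp_bdd_above compact_imp_bounded)
    then show "u x \<le> w1" unfolding w1_def using that by (intro cSup_upper) auto
  qed
  define S where "S = {s \<in> {0..L}. w0 < u s \<and> u s < w1}"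
  define \<Gamma>t where "\<Gamma>t = {x \<in> r ` {0..L}. w0 < w x \<and> w x < w1}"
  have rS: "r ` S = \<Gamma>t" by (auto simp: S_def \<Gamma>t_def u_def)
  have S_alt: "{s \<in> {0..L}. r s \<in> \<Gamma>t} = S" by (auto simp: S_def \<Gamma>t_def u_def)
  have Ssub: "S \<subseteq> {0..L}" by (auto simp: S_def)
  have Sb: "S \<in> sets lborel"
  proof -
    have Zc: "closed ({0..L} \<inter> u -` (- {w0<..<w1}))"
      by (rule continuous_closed_preimage[OF uc]) auto
    have "S = {0..L} - ({0..L} \<inter> u -` (- {w0<..<w1}))" by (auto simp: S_def)
    then show ?thesis using Zc by simp
  qed
  have Sl: "S \<in> sets lebesgue" using Sb by simp
  have Slm: "S \<in> lmeasurable"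
    using Sl Ssub by (intro bounded_set_imp_lmeasurable) (auto intro: bounded_subset[of "{0..L}"])
  define m where "m = measure lebesgue S"
  have m_lborel: "m = measure lborel S" unfolding m_def using Sb by simp
  have m_int: "integral S (\<lambda>x. 1) = m" unfolding m_def using lmeasure_integral[OF Slm] by simp
  have m0: "0 \<le> m" by (simp add: m_def)
  have gA: "g absolutely_integrable_on {0..L}"
    using w_H1 absolutely_integrable_on_Icc_iff_Ioo unfolding H1_weak_deriv_def by blast
  have gS: "g absolutely_integrable_on S" by (rule set_integrable_subset[OF gA Sl Ssub])
  have agS: "(\<lambda>x. \<bar>g x\<bar>) integrable_on S" using gS unfolding absolutely_integrable_on_def by simp
  have g2A: "(\<lambda>x. (g x)\<^sup>2) absolutely_integrable_on {0..L}"
  proof -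
    have "(\<lambda>x. (g x)\<^sup>2) integrable_on {0<..<L}" using w_H1 unfolding H1_weak_deriv_def by blast
    then have "(\<lambda>x. (g x)\<^sup>2) absolutely_integrable_on {0<..<L}"
      by (rule nonnegative_absolutely_integrable_1) simp
    then show ?thesis using absolutely_integrable_on_Icc_iff_Ioo by blast
  qed
  have g2S: "(\<lambda>x. (g x)\<^sup>2) integrable_on S"
    using set_integrable_subset[OF g2A Sl Ssub] absint_int by blast
  define I1 where "I1 = integral S (\<lambda>x. \<bar>g x\<bar>)"
  define I2 where "I2 = integral S (\<lambda>x. (g x)\<^sup>2)"
  have I2nn: "0 \<le> I2" unfolding I2_def by (rule integral_nonneg[OF g2S]) simp
  have pt: "u s - w0 \<le> I1" if s: "s \<in> S" for s
  proof -
    have s': "s \<in> {0..L}" "w0 < u s" "u s < w1" using s by (auto simp: S_def)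
    obtain a b where ab: "0 \<le> a" "a \<le> b" "b \<le> L" "{a<..<b} \<subseteq> S" "u s - w0 \<le> \<bar>u b - u a\<bar>"
      using path_any[OF uc bnd t0(1) w0t[symmetric] s'] unfolding S_def by blast
    have ftc: "u b - u a = integral {a..b} g" by (rule weak_ftc[OF L uc H ab(1-3)])
    have gi: "g integrable_on {a..b}" using gA ab absint_int absolutely_integrable_on_subinterval by (metis atLeastatMost_subset_iff)
    have agi: "(\<lambda>x. \<bar>g x\<bar>) integrable_on {a..b}"
      using gA ab absolutely_integrable_on_subinterval[OF gA, of a b] unfolding absolutely_integrable_on_def by simp
    have "\<bar>integral {a..b} g\<bar> \<le> integral {a..b} (\<lambda>x. \<bar>g x\<bar>)"
      by (rule int_abs_bound[OF gi agi]) simp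
    also have "\<dots> = integral {a<..<b} (\<lambda>x. \<bar>g x\<bar>)" by (simp add: integral_open_interval_real)
    also have "\<dots> \<le> I1" unfolding I1_def
    proof (rule integral_subset_le[OF ab(4)])
      show "(\<lambda>x. \<bar>g x\<bar>) integrable_on {a<..<b}" using agi integrable_on_Icc_iff_Ioo by blast
      show "(\<lambda>x. \<bar>g x\<bar>) integrable_on S" by (rule agS)
    qed simp
    finally show ?thesis using ab(5) ftc by simp
  qed
  have cs: "I1\<^sup>2 \<le> m * I2"
  proof (rule quad_cs[OF _ m0])
    fix k :: real
    have e: "(\<lambda>x. (\<bar>g x\<bar> - k)\<^sup>2) = (\<lambda>x. ((g x)\<^sup>2 - (2 * k) * \<bar>g x\<bar>) + k\<^sup>2 * 1)"
      by (rule ext) (simp add: power2_diff power2_abs algebra_simps)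
    have i1: "(\<lambda>x. (2 * k) * \<bar>g x\<bar>) integrable_on S" by (rule int_cmul_real[OF agS])
    have i2: "(\<lambda>x. (g x)\<^sup>2 - (2 * k) * \<bar>g x\<bar>) integrable_on S" by (rule integrable_diff[OF g2S i1])
    have i3: "(\<lambda>x. k\<^sup>2 * 1) integrable_on S" using integrable_on_const[OF Slm] by blast
    have "integral S (\<lambda>x. (\<bar>g x\<bar> - k)\<^sup>2) = I2 - 2 * k * I1 + k\<^sup>2 * m"
      unfolding e Henstock_Kurzweil_Integration.integral_add[OF i2 i3]
        Henstock_Kurzweil_Integration.integral_diff[OF g2S i1]
      using integral_mult_right[of S "k\<^sup>2" "\<lambda>x. 1"] m_int by (simp add: I1_def I2_def)
    moreover have "0 \<le> integral S (\<lambda>x. (\<bar>g x\<bar> - k)\<^sup>2)"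
    proof -
      have i4: "(\<lambda>x. (\<bar>g x\<bar> - k)\<^sup>2) integrable_on S" unfolding e by (rule integrable_add[OF i2 i3])
      show ?thesis by (rule integral_nonneg[OF i4]) simp
    qed
    ultimately show "0 \<le> I2 - 2 * k * I1 + k\<^sup>2 * m" by simp
  qed
  have fi: "(\<lambda>s. (w (r s) - w0)\<^sup>2) integrable_on S"
  proof -
    have "(\<lambda>s. (u s - w0)\<^sup>2) absolutely_integrable_on S"
    proof (rule measurable_bounded_by_integrable_imp_absolutely_integrable[OF _ Sl])
      show "(\<lambda>s. (u s - w0)\<^sup>2) \<in> borel_measurable (lebesgue_on S)"
        using Sl Ssub by (intro continuous_imp_measurable_on_sets_lebesgue continuous_intros continuous_on_subset[OF uc])
      show "(\<lambda>x. I1\<^sup>2) integrable_on S" by (rule integrable_on_const[OF Slm])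
      fix s assume s: "s \<in> S"
      have "0 \<le> u s - w0" using s by (auto simp: S_def)
      then show "norm ((u s - w0)\<^sup>2) \<le> I1\<^sup>2" using pt[OF s] by (simp add: power_mono)
    qed
    then show ?thesis using absint_int by (simp add: u_def)
  qed
  have int_le: "integral S (\<lambda>s. (w (r s) - w0)\<^sup>2) \<le> m\<^sup>2 * I2"
  proof -
    have "integral S (\<lambda>s. (w (r s) - w0)\<^sup>2) \<le> integral S (\<lambda>s. I1\<^sup>2 * 1)"
    proof (rule integral_le[OF fi])
      show "(\<lambda>s. I1\<^sup>2 * 1) integrable_on S" using integrable_on_const[OF Slm] by blast
      fix s assume s: "s \<in> S"
      have "0 \<le> u s - w0" using s by (auto simp: S_def)
      then show "(w (r s) - w0)\<^sup>2 \<le> I1\<^sup>2 * 1" using pt[OF s] by (simp add: power_mono u_def)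
    qed
    also have "\<dots> = I1\<^sup>2 * m" using integral_mult_right[of S "I1\<^sup>2" "\<lambda>x. 1"] m_int by simp
    also have "\<dots> \<le> (m * I2) * m" using cs m0 by (intro mult_right_mono) auto
    finally show ?thesis by (simp add: power2_eq_square mult_ac)
  qed
  have hl: "ennreal m \<le> hausdorff1 \<Gamma>t"
    using uc.haus_lower[OF Ssub Sb] rS m_lborel by simp
  have final: "ennreal (integral S (\<lambda>s. (w (r s) - w0)\<^sup>2)) \<le> (hausdorff1 \<Gamma>t)\<^sup>2 * ennreal I2"
  proof -
    have "ennreal (integral S (\<lambda>s. (w (r s) - w0)\<^sup>2)) \<le> ennreal (m\<^sup>2 * I2)"
      by (rule ennreal_leI[OF int_le])
    also have "\<dots> = (ennreal m)\<^sup>2 * ennreal I2"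
      using m0 I2nn by (simp add: ennreal_mult ennreal_power)
    also have "\<dots> \<le> (hausdorff1 \<Gamma>t)\<^sup>2 * ennreal I2"
      by (intro mult_right_mono power_mono hl) auto
    finally show ?thesis .
  qed
  show ?thesis
    unfolding Let_def img w0_def[symmetric] w1_def[symmetric] \<Gamma>t_def[symmetric] S_alt
    using final by (simp add: I2_def)
qed

end
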